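(* Consider an $M/G/1$ queue, empty at time $0$, in which customers arrive at the times of a Poisson process of rate $\lambda>0$, the service times are i.i.d., independent of the arrival process, with finite mean $\mu$ and finite third moment, the traffic intensity $\rho=\lambda\mu$ satisfies $\rho<1$, and the single server is never idle while customers are present. Number customers $1,2,\dots$ in order of arrival, let $D_i$ be the departure time of customer $i$, and for $n\in\mathbb{N}$ let $\Pi_n\in\mathbb{S}_n$ be given by $\Pi_n(i)=\#\{j\le n: D_j\le D_i\}$, $i\in[n]$. Let $C_\infty(u,v)=\min\{u,v\}$, $u,v\in[0,1]$. Then almost surely $\Pi_n\to C_\infty$ in the pattern frequency topology, i.e. almost surely $\lim_{n\to\infty}t(\sigma,\Pi_n)=t(\sigma,C_\infty)$ for every $\sigma\in\mathbb{S}$.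
   Context: $\mathbb{S}_n$ is the set of permutations of $[n]$, $\mathbb{S}=\bigsqcup_n\mathbb{S}_n$. For $\sigma\in\mathbb{S}_k$, $\pi\in\mathbb{S}_n$, $k\le n$, the pattern frequency $t(\sigma,\pi)$ is the fraction of the $\binom nk$ subsets $\{i_1<\dots<i_k\}\subset[n]$ with $\sigma(j)<\sigma(m)\Leftrightarrow\pi(i_j)<\pi(i_m)$ for all $j,m\in[k]$. For a copula $C$ (distribution function on $[0,1]^2$ with uniform marginals) and $\sigma\in\mathbb{S}_k$, $t(\sigma,C)$ is the probability that i.i.d. $(X_1,Y_1),\dots,(X_k,Y_k)$ with distribution function $C$ have associated permutation $\pi_Y\circ\pi_X^{-1}=\sigma$, where $\pi_X(i)=\#\{j:X_j\le X_i\}$, $\pi_Y(i)=\#\{j:Y_j\le Y_i\}$. (For $C_\infty$ this equals $1$ if $\sigma$ is the identity and $0$ otherwise.) *)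

theory Defs
  imports "HOL-Probability.Probability" "HOL-Combinatorics.Permutations"
begin

definition pattern_freq :: "nat \<Rightarrow> (nat \<Rightarrow> nat) \<Rightarrow> nat \<Rightarrow> (nat \<Rightarrow> nat) \<Rightarrow> real" where
  "pattern_freq k \<sigma> n \<pi> =
     real (card {I. I \<subseteq> {1..n} \<and> card I = k \<and>
        (let s = sorted_list_of_set I in
          \<forall>j\<in>{1..k}. \<forall>m\<in>{1..k}.
             (\<sigma> j < \<sigma> m \<longleftrightarrow> \<pi> (s ! (j - 1)) < \<pi> (s ! (m - 1))))})
     / real (n choose k)"

text \<open>t(sigma, C_infinity) for C_infinity(u,v) = min u v: 1 for the identity, 0 otherwise.\<close>
definition pattern_freq_Cinf :: "nat \<Rightarrow> (nat \<Rightarrow> nat) \<Rightarrow> real" where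
  "pattern_freq_Cinf k \<sigma> = (if \<forall>i\<in>{1..k}. \<sigma> i = i then 1 else 0)"

definition present :: "(nat \<Rightarrow> real) \<Rightarrow> (nat \<Rightarrow> real) \<Rightarrow> real \<Rightarrow> nat set" where
  "present A D t = {i. 1 \<le> i \<and> A i \<le> t \<and> t < D i}"

text \<open>The server splits its unit capacity among present customers via
  rates r i t (covering FIFO, LIFO, preemptive disciplines, processor sharing, ...); it is
  never idle while customers are present, and a customer departs exactly when its received
  service reaches its service requirement.\<close>
definition work_conserving_schedule ::
  "(nat \<Rightarrow> real) \<Rightarrow> (nat \<Rightarrow> real) \<Rightarrow> (nat \<Rightarrow> real) \<Rightarrow> bool" where
  "work_conserving_schedule A S D \<longleftrightarrow>
     (\<exists>r :: nat \<Rightarrow> real \<Rightarrow> real.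
        (\<forall>i\<ge>1. A i \<le> D i) \<and>
        (\<forall>i\<ge>1. \<forall>t. 0 \<le> r i t \<and> (r i t \<noteq> 0 \<longrightarrow> A i \<le> t \<and> t < D i)) \<and>
        (\<forall>i\<ge>1. (r i has_integral S i) {A i..D i}) \<and>
        (\<forall>i\<ge>1. \<forall>t. A i \<le> t \<and> t < D i \<longrightarrow> integral {A i..t} (r i) < S i) \<and>
        (\<forall>t. present A D t \<noteq> {} \<longrightarrow>
              finite (present A D t) \<and> (\<Sum>i\<in>present A D t. r i t) = 1))"

definition departure_perm :: "(nat \<Rightarrow> real) \<Rightarrow> nat \<Rightarrow> nat \<Rightarrow> nat" where
  "departure_perm D n i = card {j\<in>{1..n}. D j \<le> D i}"

end

theory Submission
  imports Defs "HOL-Library.Discrete_Functions"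
begin

definition badset :: "nat \<Rightarrow> nat \<Rightarrow> (nat \<Rightarrow> nat) \<Rightarrow> nat set set" where
  "badset n k \<pi> = {I. I \<subseteq> {1..n} \<and> card I = k \<and> (\<exists>a\<in>I. \<exists>b\<in>I. a < b \<and> \<pi> b \<le> \<pi> a)}"

lemma sl_less:
  assumes "finite I" "i < card I" "j < card I"
  shows "sorted_list_of_set I ! i < sorted_list_of_set I ! j \<longleftrightarrow> i < j"
proof -
  have sw: "sorted_wrt (<) (sorted_list_of_set I)" by simp
  have len: "length (sorted_list_of_set I) = card I" by simp
  show ?thesis
  proof
    assume "i < j" then show "sorted_list_of_set I ! i < sorted_list_of_set I ! j"
      using sorted_wrt_nth_less[OF sw] assms len by auto
  next
    assume h: "sorted_list_of_set I ! i < sorted_list_of_set I ! j"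
    show "i < j"
    proof (rule ccontr)
      assume "\<not> i < j"
      then have "j < i \<or> i = j" by auto
      then show False
        using sorted_wrt_nth_less[OF sw, of j i] assms len h by auto
    qed
  qed
qed

lemma cond_good:
  fixes \<pi> :: "nat \<Rightarrow> nat"
  assumes "finite I" "card I = k"
    and good: "\<forall>a\<in>I. \<forall>b\<in>I. a < b \<longrightarrow> \<pi> a < \<pi> b"
    and "j \<in> {1..k}" "m \<in> {1..k}"
  shows "\<pi> (sorted_list_of_set I ! (j - 1)) < \<pi> (sorted_list_of_set I ! (m - 1)) \<longleftrightarrow> j < m"
proof -
  let ?s = "sorted_list_of_set I"
  have len: "length ?s = k" using assms by simp
  have xI: "?s ! (j - 1) \<in> I" using assms len nth_mem[of "j - 1" ?s] by auto
  have yI: "?s ! (m - 1) \<in> I" using assms len nth_mem[of "m - 1" ?s] by auto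
  have jm: "j - 1 < card I" "m - 1 < card I" using assms by auto
  consider "j < m" | "j = m" | "m < j" by linarith
  then show ?thesis
  proof cases
    case 1
    then have "?s ! (j - 1) < ?s ! (m - 1)" using sl_less[OF assms(1) jm] assms by auto
    then show ?thesis using good xI yI 1 by auto
  next
    case 2 then show ?thesis by auto
  next
    case 3
    then have "?s ! (m - 1) < ?s ! (j - 1)" using sl_less[OF assms(1) jm(2) jm(1)] assms by auto
    then have "\<pi> (?s ! (m - 1)) < \<pi> (?s ! (j - 1))" using good xI yI by auto
    then show ?thesis using 3 by auto
  qed
qed

lemma cond_bad:
  fixes \<pi> :: "nat \<Rightarrow> nat"
  assumes "finite I" "card I = k" "a \<in> I" "b \<in> I" "a < b" "\<pi> b \<le> \<pi> a"
  shows "\<exists>j\<in>{1..k}. \<exists>m\<in>{1..k}. j < m \<and>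
     \<not> \<pi> (sorted_list_of_set I ! (j - 1)) < \<pi> (sorted_list_of_set I ! (m - 1))"
proof -
  let ?s = "sorted_list_of_set I"
  have len: "length ?s = k" using assms by simp
  have set: "set ?s = I" using assms by simp
  obtain i where i: "i < k" "?s ! i = a" using assms(3) set len by (metis in_set_conv_nth)
  obtain i' where i': "i' < k" "?s ! i' = b" using assms(4) set len by (metis in_set_conv_nth)
  have "i < i'" using sl_less[OF assms(1), of i i'] i i' assms by auto
  then show ?thesis using i i' assms
    by (intro bexI[of _ "Suc i"] bexI[of _ "Suc i'"]) auto
qed

lemma perm_id:
  fixes \<sigma> :: "nat \<Rightarrow> nat"
  assumes p: "\<sigma> permutes {1..k}"
    and mono: "\<forall>j\<in>{1..k}. \<forall>m\<in>{1..k}. \<sigma> j < \<sigma> m \<longleftrightarrow> j < m"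
  shows "\<forall>i\<in>{1..k}. \<sigma> i = i"
proof
  fix i assume i: "i \<in> {1..k}"
  have si: "\<sigma> i \<in> {1..k}" using i permutes_in_image[OF p, of i] by blast
  have inj: "inj_on \<sigma> {1..k}" using p permutes_inj_on by blast
  have img: "\<sigma> ` {j\<in>{1..k}. \<sigma> j \<le> \<sigma> i} = {1..\<sigma> i}"
  proof
    show "\<sigma> ` {j\<in>{1..k}. \<sigma> j \<le> \<sigma> i} \<subseteq> {1..\<sigma> i}"
    proof
      fix x assume "x \<in> \<sigma> ` {j\<in>{1..k}. \<sigma> j \<le> \<sigma> i}"
      then obtain j where j: "j \<in> {1..k}" "\<sigma> j \<le> \<sigma> i" "x = \<sigma> j" by auto
      have "\<sigma> j \<in> {1..k}" using j(1) permutes_in_image[OF p, of j] by blast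
      then show "x \<in> {1..\<sigma> i}" using j by auto
    qed
  next
    show "{1..\<sigma> i} \<subseteq> \<sigma> ` {j\<in>{1..k}. \<sigma> j \<le> \<sigma> i}"
    proof
      fix x assume x: "x \<in> {1..\<sigma> i}"
      then have "x \<in> {1..k}" using si by auto
      then have "x \<in> \<sigma> ` {1..k}" using permutes_image[OF p] by auto
      then obtain j where "j \<in> {1..k}" "x = \<sigma> j" by auto
      then show "x \<in> \<sigma> ` {j\<in>{1..k}. \<sigma> j \<le> \<sigma> i}" using x by auto
    qed
  qed
  have "card {j\<in>{1..k}. \<sigma> j \<le> \<sigma> i} = \<sigma> i"
  proof -
    have "card (\<sigma> ` {j\<in>{1..k}. \<sigma> j \<le> \<sigma> i}) = card {j\<in>{1..k}. \<sigma> j \<le> \<sigma> i}"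
      by (rule card_image[OF inj_on_subset[OF inj]]) auto
    then show ?thesis using img by simp
  qed
  moreover have "{j\<in>{1..k}. \<sigma> j \<le> \<sigma> i} = {1..i}"
    using mono i by (auto simp: not_less[symmetric])
  ultimately show "\<sigma> i = i" by simp
qed

lemma card_all: "card {I. I \<subseteq> {1..n} \<and> card I = k} = n choose k"
  using n_subsets[of "{1..n}" k] by simp

lemma pf_id:
  assumes "\<forall>i\<in>{1..k}. \<sigma> i = i"
  shows "pattern_freq k \<sigma> n \<pi> = (real (n choose k) - real (card (badset n k \<pi>))) / real (n choose k)"
proof -
  let ?All = "{I. I \<subseteq> {1..n} \<and> card I = k}"
  let ?Mt = "{I. I \<subseteq> {1..n} \<and> card I = k \<and>
        (let s = sorted_list_of_set I in
          \<forall>j\<in>{1..k}. \<forall>m\<in>{1..k}.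
             (\<sigma> j < \<sigma> m \<longleftrightarrow> \<pi> (s ! (j - 1)) < \<pi> (s ! (m - 1))))}"
  have fin: "finite ?All" by (rule finite_subset[of _ "Pow {1..n}"]) auto
  have sub: "badset n k \<pi> \<subseteq> ?All" by (auto simp: badset_def)
  have eq: "?Mt = ?All - badset n k \<pi>"
  proof (intro set_eqI iffI)
    fix I assume I: "I \<in> ?Mt"
    have fI: "finite I" using I finite_subset by blast
    have "I \<notin> badset n k \<pi>"
    proof
      assume "I \<in> badset n k \<pi>"
      then obtain a b where ab: "a \<in> I" "b \<in> I" "a < b" "\<pi> b \<le> \<pi> a" by (auto simp: badset_def)
      from cond_bad[OF fI _ ab, of k] I obtain j m where
        "j \<in> {1..k}" "m \<in> {1..k}" "j < m" "\<not> \<pi> (sorted_list_of_set I ! (j - 1)) < \<pi> (sorted_list_of_set I ! (m - 1))"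
        by auto
      moreover have "\<forall>j\<in>{1..k}. \<forall>m\<in>{1..k}.
             (\<sigma> j < \<sigma> m \<longleftrightarrow> \<pi> (sorted_list_of_set I ! (j - 1)) < \<pi> (sorted_list_of_set I ! (m - 1)))"
        using I by (simp add: Let_def)
      ultimately show False using assms by fastforce
    qed
    then show "I \<in> ?All - badset n k \<pi>" using I by auto
  next
    fix I assume I: "I \<in> ?All - badset n k \<pi>"
    have fI: "finite I" using I finite_subset by blast
    have good: "\<forall>a\<in>I. \<forall>b\<in>I. a < b \<longrightarrow> \<pi> a < \<pi> b"
      using I by (auto simp: badset_def not_le[symmetric])
    show "I \<in> ?Mt" using I cond_good[OF fI _ good] assms by (auto simp: Let_def)
  qed
  have "card ?Mt = card ?All - card (badset n k \<pi>)"
    unfolding eq by (rule card_Diff_subset[OF finite_subset[OF sub fin] sub])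
  moreover have "card (badset n k \<pi>) \<le> card ?All" by (rule card_mono[OF fin sub])
  ultimately show ?thesis unfolding pattern_freq_def card_all
    by (simp add: of_nat_diff card_all)
qed

lemma pf_nonid:
  assumes "\<sigma> permutes {1..k}" "\<not> (\<forall>i\<in>{1..k}. \<sigma> i = i)"
  shows "pattern_freq k \<sigma> n \<pi> \<le> real (card (badset n k \<pi>)) / real (n choose k)"
    and "0 \<le> pattern_freq k \<sigma> n \<pi>"
proof -
  let ?All = "{I. I \<subseteq> {1..n} \<and> card I = k}"
  let ?Mt = "{I. I \<subseteq> {1..n} \<and> card I = k \<and>
        (let s = sorted_list_of_set I in
          \<forall>j\<in>{1..k}. \<forall>m\<in>{1..k}.
             (\<sigma> j < \<sigma> m \<longleftrightarrow> \<pi> (s ! (j - 1)) < \<pi> (s ! (m - 1))))}"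
  have fin: "finite ?All" by (rule finite_subset[of _ "Pow {1..n}"]) auto
  have sub: "badset n k \<pi> \<subseteq> ?All" by (auto simp: badset_def)
  have "?Mt \<subseteq> badset n k \<pi>"
  proof
    fix I assume I: "I \<in> ?Mt"
    have fI: "finite I" using I finite_subset by blast
    show "I \<in> badset n k \<pi>"
    proof (rule ccontr)
      assume "I \<notin> badset n k \<pi>"
      then have good: "\<forall>a\<in>I. \<forall>b\<in>I. a < b \<longrightarrow> \<pi> a < \<pi> b"
        using I by (auto simp: badset_def not_le[symmetric])
      have "\<forall>j\<in>{1..k}. \<forall>m\<in>{1..k}. \<sigma> j < \<sigma> m \<longleftrightarrow> j < m"
        using I cond_good[OF fI _ good] by (auto simp: Let_def)
      then show False using perm_id[OF assms(1)] assms(2) by blast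
    qed
  qed
  then have "card ?Mt \<le> card (badset n k \<pi>)"
    by (rule card_mono[OF finite_subset[OF sub fin]])
  then show "pattern_freq k \<sigma> n \<pi> \<le> real (card (badset n k \<pi>)) / real (n choose k)"
    unfolding pattern_freq_def by (simp add: divide_right_mono)
  show "0 \<le> pattern_freq k \<sigma> n \<pi>" unfolding pattern_freq_def by simp
qed

lemma card_pair_sets:
  assumes "a \<noteq> b"
  shows "card {I. I \<subseteq> {1..n} \<and> card I = k \<and> a \<in> I \<and> b \<in> I} \<le> (n - 2) choose (k - 2)"
proof (cases "a \<in> {1..n} \<and> b \<in> {1..n}")
  case True
  let ?F = "{I. I \<subseteq> {1..n} \<and> card I = k \<and> a \<in> I \<and> b \<in> I}"
  let ?T = "{J. J \<subseteq> {1..n} - {a, b} \<and> card J = k - 2}"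
  have inj: "inj_on (\<lambda>I. I - {a, b}) ?F"
  proof (rule inj_onI)
    fix I J assume "I \<in> ?F" "J \<in> ?F" "I - {a, b} = J - {a, b}"
    then show "I = J" by blast
  qed
  have img: "(\<lambda>I. I - {a, b}) ` ?F \<subseteq> ?T"
  proof
    fix J assume "J \<in> (\<lambda>I. I - {a, b}) ` ?F"
    then obtain I where I: "I \<in> ?F" "J = I - {a, b}" by auto
    have fI: "finite I" using I finite_subset by blast
    have "card (I - {a, b}) = card I - card {a, b}"
      using I by (intro card_Diff_subset) auto
    then show "J \<in> ?T" using I assms by auto
  qed
  have finT: "finite ?T" by (rule finite_subset[of _ "Pow {1..n}"]) auto
  have "card ?F \<le> card ?T" by (rule card_inj_on_le[OF inj img finT])
  also have "card ?T = card ({1..n} - {a, b}) choose (k - 2)" by (rule n_subsets) simp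
  also have "card ({1..n} - {a, b}) = n - 2" using True assms by (subst card_Diff_subset) auto
  finally show ?thesis .
next
  case False
  then have e: "{I. I \<subseteq> {1..n} \<and> card I = k \<and> a \<in> I \<and> b \<in> I} = {}" by auto
  show ?thesis unfolding e by simp
qed

lemma bad_card:
  fixes \<pi> :: "nat \<Rightarrow> nat"
  assumes H: "\<forall>a b. 1 \<le> a \<longrightarrow> a < b \<longrightarrow> b \<le> n \<longrightarrow> \<pi> b \<le> \<pi> a \<longrightarrow> b - a < w"
  shows "card (badset n k \<pi>) \<le> n * w * ((n - 2) choose (k - 2))"
proof -
  let ?F = "\<lambda>p. {I. I \<subseteq> {1..n} \<and> card I = k \<and> fst p \<in> I \<and> fst p + snd p \<in> I}"
  have sub: "badset n k \<pi> \<subseteq> (\<Union>p\<in>{1..n} \<times> {1..<w}. ?F p)"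
  proof
    fix I assume "I \<in> badset n k \<pi>"
    then obtain a b where I: "I \<subseteq> {1..n}" "card I = k" "a \<in> I" "b \<in> I" "a < b" "\<pi> b \<le> \<pi> a"
      by (auto simp: badset_def)
    have "1 \<le> a" "b \<le> n" using I by auto
    then have "b - a < w" using H I by blast
    then have "(a, b - a) \<in> {1..n} \<times> {1..<w}" using I by auto
    moreover have "I \<in> ?F (a, b - a)" using I by auto
    ultimately show "I \<in> (\<Union>p\<in>{1..n} \<times> {1..<w}. ?F p)" by blast
  qed
  have fin: "finite (\<Union>p\<in>{1..n} \<times> {1..<w}. ?F p)"
    by (rule finite_subset[of _ "Pow {1..n}"]) auto
  have "card (badset n k \<pi>) \<le> card (\<Union>p\<in>{1..n} \<times> {1..<w}. ?F p)"
    by (rule card_mono[OF fin sub])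
  also have "\<dots> \<le> (\<Sum>p\<in>{1..n} \<times> {1..<w}. card (?F p))" by (rule card_UN_le) simp
  also have "\<dots> \<le> (\<Sum>p\<in>{1..n} \<times> {1..<w}. (n - 2) choose (k - 2))"
    by (rule sum_mono, rule card_pair_sets) auto
  also have "\<dots> = card ({1..n} \<times> {1..<w}) * ((n - 2) choose (k - 2))" by simp
  also have "\<dots> \<le> n * w * ((n - 2) choose (k - 2))"
    by (simp add: card_cartesian_product)
  finally show ?thesis .
qed

lemma binom_id:
  assumes "k \<ge> 2"
  shows "(n choose k) * (k * (k - 1)) = n * (n - 1) * ((n - 2) choose (k - 2))"
proof -
  obtain k' where k: "k = Suc (Suc k')" using assms by (metis add_2_eq_Suc le_Suc_ex)
  show ?thesis
  proof (cases "n \<ge> 2")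
    case True
    then obtain n' where n: "n = Suc (Suc n')" by (metis add_2_eq_Suc le_Suc_ex)
    have 1: "Suc (Suc k') * (Suc (Suc n') choose Suc (Suc k')) = Suc (Suc n') * (Suc n' choose Suc k')"
      using binomial_absorption[of "Suc k'" "Suc (Suc n')"] by simp
    have 2: "Suc k' * (Suc n' choose Suc k') = Suc n' * (n' choose k')"
      using binomial_absorption[of "k'" "Suc n'"] by simp
    have "(n choose k) * (k * (k - 1)) = Suc k' * (Suc (Suc k') * (Suc (Suc n') choose Suc (Suc k')))"
      unfolding n k by (simp add: algebra_simps)
    also have "\<dots> = Suc (Suc n') * (Suc k' * (Suc n' choose Suc k'))" unfolding 1 by (simp add: algebra_simps)
    also have "\<dots> = n * (n - 1) * ((n - 2) choose (k - 2))" unfolding 2 n k by (simp add: algebra_simps)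
    finally show ?thesis .
  next
    case False
    then have "n choose k = 0" using assms by (intro binomial_eq_0) simp
    moreover have "n * (n - 1) = 0" using False by (cases n) auto
    ultimately show ?thesis by (metis mult_0 mult_0_right)
  qed
qed

lemma bad_limit:
  fixes \<pi> :: "nat \<Rightarrow> nat \<Rightarrow> nat"
  assumes H: "\<forall>\<epsilon>>0. \<exists>N. \<forall>n\<ge>N. \<forall>a b. 1 \<le> a \<longrightarrow> a < b \<longrightarrow> b \<le> n \<longrightarrow> \<pi> n b \<le> \<pi> n a \<longrightarrow> real (b - a) < \<epsilon> * real n"
  shows "(\<lambda>n. real (card (badset n k (\<pi> n))) / real (n choose k)) \<longlonglongrightarrow> 0"
proof (cases "k < 2")
  case True
  have "badset n k (\<pi> n) = {}" for n
  proof -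
    { fix I a b assume I: "I \<subseteq> {1..n}" "card I = k" "a \<in> I" "b \<in> I" "a < b"
      have "finite I" using I finite_subset by blast
      then have "card {a, b} \<le> card I" using I by (intro card_mono) auto
      then have False using I True by auto }
    then show ?thesis unfolding badset_def by blast
  qed
  then show ?thesis by simp
next
  case False
  then have k2: "k \<ge> 2" by simp
  show ?thesis
  proof (rule LIMSEQ_I)
    fix e :: real assume e: "0 < e"
    define \<epsilon> where "\<epsilon> = e / (4 * real k ^ 2)"
    have kpos: "real k > 0" using k2 by simp
    have \<epsilon>: "\<epsilon> > 0" using e kpos by (simp add: \<epsilon>_def)
    obtain N where N: "\<forall>n\<ge>N. \<forall>a b. 1 \<le> a \<longrightarrow> a < b \<longrightarrow> b \<le> n \<longrightarrow> \<pi> n b \<le> \<pi> n a \<longrightarrow> real (b - a) < \<epsilon> * real n"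
      using H[rule_format, OF \<epsilon>] by (elim exE)
    define n0 where "n0 = max N (max k (nat \<lceil>4 * real k ^ 2 / e\<rceil> + 2))"
    have "\<forall>n\<ge>n0. norm (real (card (badset n k (\<pi> n))) / real (n choose k) - 0) < e"
    proof (intro allI impI)
      fix n assume n: "n \<ge> n0"
      define w where "w = nat \<lceil>\<epsilon> * n\<rceil>"
      have "\<forall>a b. 1 \<le> a \<longrightarrow> a < b \<longrightarrow> b \<le> n \<longrightarrow> \<pi> n b \<le> \<pi> n a \<longrightarrow> b - a < w"
      proof (intro allI impI)
        fix a b assume "1 \<le> a" "a < b" "b \<le> n" "\<pi> n b \<le> \<pi> n a"
        then have "real (b - a) < \<epsilon> * real n" using N n n0_def by auto
        also have "\<dots> \<le> real w" unfolding w_def by linarith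
        finally show "b - a < w" by simp
      qed
      from bad_card[OF this, of k]
      have B: "real (card (badset n k (\<pi> n))) \<le> real n * real w * real ((n - 2) choose (k - 2))"
        by (metis of_nat_le_iff of_nat_mult)
      have w: "real w \<le> \<epsilon> * n + 1"
      proof -
        have "0 \<le> \<epsilon> * real n" using \<epsilon> by simp
        then have "real w = of_int \<lceil>\<epsilon> * real n\<rceil>" unfolding w_def by simp
        then show ?thesis using ceiling_correct[of "\<epsilon> * real n"] by linarith
      qed
      have nk: "n \<ge> k" using n unfolding n0_def by simp
      have h: "n \<ge> nat \<lceil>4 * real k ^ 2 / e\<rceil> + 2" using n unfolding n0_def by simp
      then have n2: "n \<ge> 2" by simp
      have "real n \<ge> real (nat \<lceil>4 * real k ^ 2 / e\<rceil>) + 2" using h by linarith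
      moreover have "real (nat \<lceil>4 * real k ^ 2 / e\<rceil>) \<ge> 4 * real k ^ 2 / e" by (rule real_nat_ceiling_ge)
      ultimately have nbig: "real n \<ge> 4 * real k ^ 2 / e + 2" by linarith
      have cpos: "real (n choose k) > 0" using nk by simp
      have id: "real (n choose k) * (real k * (real k - 1)) = real n * (real n - 1) * real ((n - 2) choose (k - 2))"
      proof -
        have "real ((n choose k) * (k * (k - 1))) = real (n * (n - 1) * ((n - 2) choose (k - 2)))"
          using binom_id[OF k2, of n] by simp
        moreover have "real (k - 1) = real k - 1" "real (n - 1) = real n - 1" using k2 n2 by (simp_all add: of_nat_diff)
        ultimately show ?thesis by (simp only: of_nat_mult)
      qed
      define c where "c = real (n choose k)"
      define C2 where "C2 = real ((n - 2) choose (k - 2))"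
      define B where "B = real (card (badset n k (\<pi> n)))"
      have C2: "C2 \<ge> 0" unfolding C2_def by simp
      have "B * (real n - 1) \<le> real n * real w * C2 * (real n - 1)"
        using B n2 unfolding B_def C2_def by (intro mult_right_mono) auto
      also have "\<dots> = real w * (real n * (real n - 1) * C2)" by (simp add: algebra_simps)
      also have "\<dots> = real w * (c * (real k * (real k - 1)))"
        using id unfolding c_def C2_def by simp
      also have "\<dots> \<le> (\<epsilon> * n + 1) * (c * real k ^ 2)"
      proof (rule mult_mono[OF w])
        show "c * (real k * (real k - 1)) \<le> c * real k ^ 2"
          using cpos kpos unfolding c_def by (intro mult_left_mono) (auto simp: power2_eq_square algebra_simps)
      qed (use cpos \<epsilon> c_def k2 in auto)
      also have "\<dots> = c * (e * n / 4 + real k ^ 2)"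
        using kpos unfolding \<epsilon>_def by (simp add: field_simps)
      also have "\<dots> < c * (e * (real n - 1))"
      proof (rule mult_strict_left_mono)
        have "e * real n \<ge> e * (4 * real k ^ 2 / e + 2)" using nbig e by (intro mult_left_mono) auto
        also have "e * (4 * real k ^ 2 / e + 2) = 4 * real k ^ 2 + 2 * e" using e by (simp add: field_simps)
        finally have "e * real n \<ge> 4 * real k ^ 2 + 2 * e" .
        moreover have "(real k)^2 \<ge> 0" by simp
        moreover have "e * (real n - 1) = e * real n - e" by (simp add: algebra_simps)
        ultimately show "e * n / 4 + real k ^ 2 < e * (real n - 1)" using e by linarith
      qed (use cpos c_def in auto)
      finally have "B * (real n - 1) < e * c * (real n - 1)" by (simp add: algebra_simps)
      then have "B < e * c" using n2 by (simp add: mult_less_cancel_right)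
      then have "B / c < e" using cpos unfolding c_def by (simp add: divide_less_eq)
      then show "norm (real (card (badset n k (\<pi> n))) / real (n choose k) - 0) < e"
        unfolding B_def c_def by simp
    qed
    then show "\<exists>no. \<forall>n\<ge>no. norm (real (card (badset n k (\<pi> n))) / real (n choose k) - 0) < e" by blast
  qed
qed


lemma pf_limit:
  fixes \<pi> :: "nat \<Rightarrow> nat \<Rightarrow> nat"
  assumes H: "\<forall>\<epsilon>>0. \<exists>N. \<forall>n\<ge>N. \<forall>a b. 1 \<le> a \<longrightarrow> a < b \<longrightarrow> b \<le> n \<longrightarrow> \<pi> n b \<le> \<pi> n a \<longrightarrow> real (b - a) < \<epsilon> * real n"
    and p: "\<sigma> permutes {1..k}"
  shows "(\<lambda>n. pattern_freq k \<sigma> n (\<pi> n)) \<longlonglongrightarrow> pattern_freq_Cinf k \<sigma>"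
proof -
  note L = bad_limit[OF H, of k]
  show ?thesis
  proof (cases "\<forall>i\<in>{1..k}. \<sigma> i = i")
    case True
    have ev: "\<forall>\<^sub>F n in sequentially. 1 - real (card (badset n k (\<pi> n))) / real (n choose k) = pattern_freq k \<sigma> n (\<pi> n)"
      unfolding eventually_sequentially
    proof (intro exI allI impI)
      fix n assume "n \<ge> k"
      then have "real (n choose k) > 0" by simp
      then show "1 - real (card (badset n k (\<pi> n))) / real (n choose k) = pattern_freq k \<sigma> n (\<pi> n)"
        unfolding pf_id[OF True] by (simp add: field_simps)
    qed
    have "(\<lambda>n. 1 - real (card (badset n k (\<pi> n))) / real (n choose k)) \<longlonglongrightarrow> 1 - 0"
      by (intro tendsto_diff L tendsto_const)
    then have "(\<lambda>n. pattern_freq k \<sigma> n (\<pi> n)) \<longlonglongrightarrow> 1"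
      using Lim_transform_eventually[OF _ ev] by simp
    then show ?thesis using True by (simp add: pattern_freq_Cinf_def)
  next
    case False
    have "(\<lambda>n. pattern_freq k \<sigma> n (\<pi> n)) \<longlonglongrightarrow> 0"
      by (rule tendsto_sandwich[OF _ _ tendsto_const L])
         (use pf_nonid[OF p False] in auto)
    moreover have "pattern_freq_Cinf k \<sigma> = 0" using False by (simp add: pattern_freq_Cinf_def)
    ultimately show ?thesis by simp
  qed
qed

lemma int_le_service:
  fixes r :: "real \<Rightarrow> real"
  assumes hi: "(r has_integral s) {a..d}"
    and zero: "\<And>t. r t \<noteq> 0 \<Longrightarrow> a \<le> t \<and> t < d"
    and nn: "\<And>t. 0 \<le> r t"
  shows "r integrable_on {u..v} \<and> integral {u..v} r \<le> s"
proof -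
  let ?T = "{min u a..max v d}"
  have z: "r x = 0" if "x \<notin> {a..d}" for x using zero[of x] that by force
  have hT: "(r has_integral s) ?T"
  proof (rule has_integral_on_superset[OF hi])
    show "\<And>x. x \<notin> {a..d} \<Longrightarrow> r x = 0" by (rule z)
  next
    show "{a..d} \<subseteq> ?T" by auto
  qed
  have iuv: "r integrable_on {u..v}"
  proof (cases "u \<le> v")
    case True
    show ?thesis by (rule integrable_on_subinterval[OF has_integral_integrable[OF hT]]) (use True in auto)
  next
    case False
    then show ?thesis by (simp add: integrable_on_empty)
  qed
  have "integral {u..v} r \<le> integral ?T r"
  proof (cases "u \<le> v")
    case True
    show ?thesis
      by (rule integral_subset_le) (use True iuv has_integral_integrable[OF hT] nn in auto)
  next
    case False
    then have "integral {u..v} r = 0" by simp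
    moreover have "integral ?T r \<ge> 0"
      by (rule integral_nonneg[OF has_integral_integrable[OF hT]]) (use nn in auto)
    ultimately show ?thesis by simp
  qed
  also have "integral ?T r = s" using hT by (rule integral_unique)
  finally show ?thesis using iuv by simp
qed

lemma queue_overlap:
  fixes A S D :: "nat \<Rightarrow> real"
  assumes ws: "work_conserving_schedule A S D"
    and mono: "\<And>l m. 1 \<le> l \<Longrightarrow> l < m \<Longrightarrow> A l < A m"
    and ij: "1 \<le> i" "i < j" "A j \<le> D i"
  shows "\<exists>p. 1 \<le> p \<and> p \<le> i \<and> A j - A p \<le> (\<Sum>l\<in>{p..<j}. S l)"
proof -
  obtain r :: "nat \<Rightarrow> real \<Rightarrow> real" where
    r1: "\<forall>i\<ge>1. A i \<le> D i" and
    r2: "\<forall>i\<ge>1. \<forall>t. 0 \<le> r i t \<and> (r i t \<noteq> 0 \<longrightarrow> A i \<le> t \<and> t < D i)" and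
    r3: "\<forall>i\<ge>1. (r i has_integral S i) {A i..D i}" and
    r5: "\<forall>t. present A D t \<noteq> {} \<longrightarrow>
              finite (present A D t) \<and> (\<Sum>i\<in>present A D t. r i t) = 1"
    using ws unfolding work_conserving_schedule_def by blast
  have monole: "A l \<le> A m" if "1 \<le> l" "l \<le> m" for l m
    using mono[of l m] that by (cases "l = m") auto
  define P where "P = {p. 1 \<le> p \<and> p \<le> i \<and> (\<forall>t. A p \<le> t \<and> t < A i \<longrightarrow> present A D t \<noteq> {})}"
  have iP: "i \<in> P" unfolding P_def using ij by auto
  define p where "p = (LEAST p. p \<in> P)"
  have pP: "p \<in> P" unfolding p_def using iP by (rule LeastI)
  have pmin: "p \<le> q" if "q \<in> P" for q unfolding p_def using that by (rule Least_le)
  have p1: "1 \<le> p" and pi: "p \<le> i" using pP unfolding P_def by auto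
  have busy: "present A D t \<noteq> {}" if "A p \<le> t" "t < A j" for t
  proof (cases "t < A i")
    case True then show ?thesis using pP that unfolding P_def by auto
  next
    case False
    then have "i \<in> present A D t" using ij that unfolding present_def by auto
    then show ?thesis by auto
  qed
  have early: "D l \<le> t" if "1 \<le> l" "l < p" "A p \<le> t" for l t
  proof -
    have "p - 1 \<notin> P" using pmin[of "p - 1"] that by auto
    moreover have "1 \<le> p - 1" "p - 1 \<le> i" using that pi by auto
    ultimately obtain t0 where t0: "A (p - 1) \<le> t0" "t0 < A i" "present A D t0 = {}"
      unfolding P_def by auto
    have "t0 < A p"
    proof (rule ccontr)
      assume "\<not> t0 < A p"
      then show False using pP t0 unfolding P_def by auto
    qed
    have "A l \<le> A (p - 1)" using monole[of l "p - 1"] that by auto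
    then have "l \<notin> present A D t0" using t0 by auto
    moreover have "A l \<le> t0" using \<open>A l \<le> A (p - 1)\<close> t0 by linarith
    ultimately have "\<not> t0 < D l" using that unfolding present_def by auto
    then have "D l \<le> t0" by simp
    then show ?thesis using \<open>t0 < A p\<close> that by auto
  qed
  have sum1: "(\<Sum>l\<in>{p..<j}. r l t) = 1" if t: "A p \<le> t" "t < A j" for t
  proof -
    have sub: "present A D t \<subseteq> {p..<j}"
    proof
      fix l assume l: "l \<in> present A D t"
      then have l1: "1 \<le> l" "A l \<le> t" "t < D l" unfolding present_def by auto
      have "l < j"
      proof (rule ccontr)
        assume "\<not> l < j"
        then have "A j \<le> A l" using monole[of j l] ij by auto
        then show False using l1 t by auto
      qed
      moreover have "p \<le> l"
      proof (rule ccontr)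
        assume "\<not> p \<le> l"
        then have "D l \<le> t" using early[of l t] l1 t by auto
        then show False using l1 by auto
      qed
      ultimately show "l \<in> {p..<j}" by auto
    qed
    have "(\<Sum>l\<in>{p..<j}. r l t) = (\<Sum>l\<in>present A D t. r l t)"
    proof (rule sum.mono_neutral_right[OF _ sub])
      show "finite {p..<j}" by simp
      show "\<forall>l\<in>{p..<j} - present A D t. r l t = 0"
      proof
        fix l assume l: "l \<in> {p..<j} - present A D t"
        then have "1 \<le> l" using p1 by auto
        then show "r l t = 0" using r2 l unfolding present_def by force
      qed
    qed
    also have "\<dots> = 1" using r5 busy[OF t] by auto
    finally show ?thesis .
  qed
  have each: "r l integrable_on {A p..A j} \<and> integral {A p..A j} (r l) \<le> S l" if "l \<in> {p..<j}" for l
  proof -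
    have l1: "1 \<le> l" using that p1 by auto
    show ?thesis
      by (rule int_le_service[of "r l" "S l" "A l" "D l"]) (use r2 r3 l1 in auto)
  qed
  have "A p \<le> A j" using monole[of p j] p1 pi ij by auto
  have "A j - A p = integral {A p..A j} (\<lambda>t. 1::real)" using \<open>A p \<le> A j\<close> by simp
  also have "\<dots> = integral {A p..A j} (\<lambda>t. \<Sum>l\<in>{p..<j}. r l t)"
  proof (rule integral_spike[of "{A j}"])
    show "negligible {A j}" by simp
    fix t assume "t \<in> {A p..A j} - {A j}"
    then show "(\<Sum>l\<in>{p..<j}. r l t) = 1" using sum1 by auto
  qed
  also have "\<dots> = (\<Sum>l\<in>{p..<j}. integral {A p..A j} (r l))"
    by (rule Henstock_Kurzweil_Integration.integral_sum) (use each in auto)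
  also have "\<dots> \<le> (\<Sum>l\<in>{p..<j}. S l)"
    by (rule sum_mono) (use each in auto)
  finally show ?thesis using p1 pi by auto
qed

lemma seq_bound:
  fixes U :: "nat \<Rightarrow> real" and \<eta> a :: real
  assumes L: "(\<lambda>n. U n / real n) \<longlonglongrightarrow> a" and eta: "\<eta> > 0"
  shows "\<exists>K. \<forall>n l. l \<le> n \<longrightarrow> \<bar>U l - a * l\<bar> \<le> \<eta> * real n + K"
proof -
  obtain L0 where L0: "\<forall>l\<ge>L0. norm (U l / real l - a) < \<eta>"
    using LIMSEQ_D[OF L eta] by blast
  define L1 where "L1 = max L0 1"
  define K where "K = (\<Sum>l<L1. \<bar>U l - a * l\<bar>)"
  have "\<forall>n l. l \<le> n \<longrightarrow> \<bar>U l - a * l\<bar> \<le> \<eta> * real n + K"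
  proof (intro allI impI)
    fix n l :: nat assume ln: "l \<le> n"
    have K0: "K \<ge> 0" unfolding K_def by (intro sum_nonneg) auto
    have etan: "\<eta> * real l \<le> \<eta> * real n" using ln eta by simp
    show "\<bar>U l - a * l\<bar> \<le> \<eta> * real n + K"
    proof (cases "l < L1")
      case True
      then have "\<bar>U l - a * l\<bar> \<le> K" unfolding K_def
        by (intro member_le_sum[of l "{..<L1}" "\<lambda>l. \<bar>U l - a * l\<bar>"]) auto
      moreover have "0 \<le> \<eta> * real n" using eta by simp
      ultimately show ?thesis by linarith
    next
      case False
      then have l: "l \<ge> L0" "l \<ge> 1" unfolding L1_def by auto
      have "\<bar>U l / real l - a\<bar> < \<eta>" using L0 l by auto
      moreover have "U l - a * l = real l * (U l / real l - a)" using l by (simp add: field_simps)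
      ultimately have "\<bar>U l - a * l\<bar> \<le> real l * \<eta>"
        by (simp add: abs_mult mult_left_mono)
      then show ?thesis using etan K0 by (simp add: mult.commute)
    qed
  qed
  then show ?thesis by blast
qed

lemma gap:
  fixes U V :: "nat \<Rightarrow> real"
  assumes LU: "(\<lambda>n. U n / real n) \<longlonglongrightarrow> a" and LV: "(\<lambda>n. V n / real n) \<longlonglongrightarrow> m"
    and ma: "m < a" and eps: "\<epsilon> > 0"
  shows "\<exists>N. \<forall>n\<ge>N. \<forall>p j. 1 \<le> p \<longrightarrow> p < j \<longrightarrow> j \<le> n \<longrightarrow> \<epsilon> * real n \<le> real (j - p) \<longrightarrow>
            V (j - 1) - V (p - 1) < U j - U p"
proof -
  define \<delta> where "\<delta> = a - m"
  have \<delta>: "\<delta> > 0" using ma by (simp add: \<delta>_def)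
  define \<eta> where "\<eta> = \<delta> * \<epsilon> / 8"
  have \<eta>: "\<eta> > 0" using \<delta> eps by (simp add: \<eta>_def)
  obtain K1 where K1: "\<forall>n l. l \<le> n \<longrightarrow> \<bar>U l - a * l\<bar> \<le> \<eta> * real n + K1"
    using seq_bound[OF LU \<eta>] by blast
  obtain K2 where K2: "\<forall>n l. l \<le> n \<longrightarrow> \<bar>V l - m * l\<bar> \<le> \<eta> * real n + K2"
    using seq_bound[OF LV \<eta>] by blast
  define K where "K = max K1 K2"
  define N where "N = nat \<lceil>8 * K / (\<delta> * \<epsilon>)\<rceil> + 1"
  have "\<forall>n\<ge>N. \<forall>p j. 1 \<le> p \<longrightarrow> p < j \<longrightarrow> j \<le> n \<longrightarrow> \<epsilon> * real n \<le> real (j - p) \<longrightarrow>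
            V (j - 1) - V (p - 1) < U j - U p"
  proof (intro allI impI)
    fix n p j :: nat assume n: "n \<ge> N" and pj: "1 \<le> p" "p < j" "j \<le> n" and big: "\<epsilon> * real n \<le> real (j - p)"
    have u1: "\<bar>U j - a * j\<bar> \<le> \<eta> * real n + K" using K1 pj K_def by fastforce
    have u2: "\<bar>U p - a * p\<bar> \<le> \<eta> * real n + K" using K1[rule_format, of p n] pj K_def by fastforce
    have v1: "\<bar>V (j - 1) - m * real (j - 1)\<bar> \<le> \<eta> * real n + K" using K2[rule_format, of "j - 1" n] pj K_def by fastforce
    have v2: "\<bar>V (p - 1) - m * real (p - 1)\<bar> \<le> \<eta> * real n + K" using K2[rule_format, of "p - 1" n] pj K_def by fastforce
    have jp: "real (j - 1) - real (p - 1) = real j - real p" "real (j - p) = real j - real p" using pj by (simp_all add: of_nat_diff)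
    have d1: "\<delta> * (\<epsilon> * real n) \<le> \<delta> * (real j - real p)" using big jp \<delta> by (intro mult_left_mono) auto
    have "real n \<ge> real (nat \<lceil>8 * K / (\<delta> * \<epsilon>)\<rceil>) + 1" using n unfolding N_def by linarith
    moreover have "real (nat \<lceil>8 * K / (\<delta> * \<epsilon>)\<rceil>) \<ge> 8 * K / (\<delta> * \<epsilon>)" by (rule real_nat_ceiling_ge)
    ultimately have "real n > 8 * K / (\<delta> * \<epsilon>)" by linarith
    then have "real n * (\<delta> * \<epsilon>) > 8 * K" using \<delta> eps by (simp add: divide_less_eq)
    then have d2: "\<delta> * \<epsilon> * real n > 8 * K" by (simp add: algebra_simps)
    have e1: "\<eta> * real n = \<delta> * \<epsilon> * real n / 8" unfolding \<eta>_def by simp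
    have "U j - U p - (V (j - 1) - V (p - 1)) \<ge> a * (real j - real p) - m * (real (j - 1) - real (p - 1)) - 4 * (\<eta> * real n + K)"
      using u1 u2 v1 v2 by (simp add: algebra_simps abs_le_iff) 
    also have "a * (real j - real p) - m * (real (j - 1) - real (p - 1)) = \<delta> * (real j - real p)"
      unfolding jp \<delta>_def by (simp add: algebra_simps)
    finally show "V (j - 1) - V (p - 1) < U j - U p"
      using d1 d2 e1 by (simp add: algebra_simps)
  qed
  then show ?thesis by blast
qed

lemma interp:
  fixes T :: "nat \<Rightarrow> real"
  assumes mono: "\<And>n. T n \<le> T (Suc n)" and nn: "\<And>n. 0 \<le> T n"
    and sub: "(\<lambda>k. T (k^2) / real (k^2)) \<longlonglongrightarrow> m"
  shows "(\<lambda>n. T n / real n) \<longlonglongrightarrow> m"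
proof -
  define r where "r = floor_sqrt"
  have mono': "T a \<le> T b" if "a \<le> b" for a b using lift_Suc_mono_le[of T, OF mono that] .
  have rlim: "filterlim r at_top sequentially"
    unfolding filterlim_at_top eventually_sequentially
  proof
    fix Z show "\<exists>N. \<forall>n\<ge>N. Z \<le> r n"
      by (rule exI[of _ "Z^2"]) (auto simp: r_def intro: le_floor_sqrtI)
  qed
  have sub': "(\<lambda>k. T ((Suc k)^2) / real ((Suc k)^2)) \<longlonglongrightarrow> m"
    using sub by (rule LIMSEQ_Suc)
  have q1: "(\<lambda>k. (real k / real (Suc k))^2) \<longlonglongrightarrow> 1^2"
    by (intro tendsto_power LIMSEQ_n_over_Suc_n)
  have q2: "(\<lambda>k. (real (Suc k) / real k)^2) \<longlonglongrightarrow> 1^2"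
    by (intro tendsto_power LIMSEQ_Suc_n_over_n)
  define lo where "lo = (\<lambda>n. T ((r n)^2) / real ((r n)^2) * (real (r n) / real (Suc (r n)))^2)"
  define up where "up = (\<lambda>n. T ((Suc (r n))^2) / real ((Suc (r n))^2) * (real (Suc (r n)) / real (r n))^2)"
  have "lo \<longlonglongrightarrow> m * 1^2" unfolding lo_def
    by (intro tendsto_mult filterlim_compose[OF sub rlim] filterlim_compose[OF q1 rlim])
  then have lo: "lo \<longlonglongrightarrow> m" by simp
  have "up \<longlonglongrightarrow> m * 1^2" unfolding up_def
    by (intro tendsto_mult filterlim_compose[OF sub' rlim] filterlim_compose[OF q2 rlim])
  then have up: "up \<longlonglongrightarrow> m" by simp
  have bounds: "lo n \<le> T n / real n \<and> T n / real n \<le> up n" if n: "n \<ge> 1" for n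
  proof -
    let ?r = "r n"
    have r1: "?r \<ge> 1" using n by (simp add: r_def Suc_le_eq)
    have rl: "?r^2 \<le> n" unfolding r_def by simp
    have ru: "n < (Suc ?r)^2" unfolding r_def by (rule Suc_floor_sqrt_power2_gt)
    have rl': "real ?r ^ 2 \<le> real n" using rl by (metis of_nat_le_iff of_nat_power)
    have ru': "real n \<le> real (Suc ?r) ^ 2" using ru by (metis less_imp_le of_nat_le_iff of_nat_power)
    have rpos: "real ?r > 0" using r1 by simp
    have "lo n = T (?r^2) / real (Suc ?r) ^ 2"
      unfolding lo_def using rpos by (simp add: power_divide)
    also have "\<dots> \<le> T n / real (Suc ?r) ^ 2"
      by (intro divide_right_mono mono' rl) simp
    also have "\<dots> \<le> T n / real n"
      using n ru' nn[of n] by (intro divide_left_mono) auto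
    finally have 1: "lo n \<le> T n / real n" .
    have "T n / real n \<le> T ((Suc ?r)^2) / real n"
      by (intro divide_right_mono mono') (use ru in auto)
    also have "\<dots> \<le> T ((Suc ?r)^2) / real ?r ^ 2"
      using rl' rpos nn n by (intro divide_left_mono) auto
    also have "\<dots> = up n"
      unfolding up_def using rpos by (simp add: power_divide)
    finally show ?thesis using 1 by simp
  qed
  show ?thesis
  proof (rule tendsto_sandwich[OF _ _ lo up])
    show "\<forall>\<^sub>F n in sequentially. lo n \<le> T n / real n"
      using bounds unfolding eventually_sequentially by blast
    show "\<forall>\<^sub>F n in sequentially. T n / real n \<le> up n"
      using bounds unfolding eventually_sequentially by blast
  qed
qed

context prob_space begin

lemma cheb_sum:
  fixes Y :: "nat \<Rightarrow> 'a \<Rightarrow> real" and m s a :: real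
  assumes meas: "\<And>i. i \<ge> 1 \<Longrightarrow> Y i \<in> borel_measurable M"
    and sq: "\<And>i. i \<ge> 1 \<Longrightarrow> integrable M (\<lambda>\<omega>. Y i \<omega> ^ 2)"
    and ex: "\<And>i. i \<ge> 1 \<Longrightarrow> expectation (Y i) = m"
    and ex2: "\<And>i. i \<ge> 1 \<Longrightarrow> expectation (\<lambda>\<omega>. Y i \<omega> ^ 2) = s"
    and ip: "\<And>i j. i \<ge> 1 \<Longrightarrow> j \<ge> 1 \<Longrightarrow> i \<noteq> j \<Longrightarrow> integrable M (\<lambda>\<omega>. Y i \<omega> * Y j \<omega>)"
    and ep: "\<And>i j. i \<ge> 1 \<Longrightarrow> j \<ge> 1 \<Longrightarrow> i \<noteq> j \<Longrightarrow> expectation (\<lambda>\<omega>. Y i \<omega> * Y j \<omega>) = m * m"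
    and a: "a > 0"
  shows "prob {\<omega> \<in> space M. a \<le> \<bar>(\<Sum>k\<in>{1..n}. Y k \<omega>) - real n * m\<bar>} \<le> real n * (s - m^2) / a^2"
proof -
  define I where "I = {1..n}"
  define T where "T = (\<lambda>\<omega>. \<Sum>k\<in>I. Y k \<omega>)"
  have I1: "i \<in> I \<Longrightarrow> i \<ge> 1" for i unfolding I_def by auto
  have finI: "finite I" unfolding I_def by simp
  have cardI: "card I = n" unfolding I_def by simp
  have intY: "integrable M (Y i)" if "i \<in> I" for i
    using square_integrable_imp_integrable[OF meas sq] I1[OF that] by blast
  have measT: "T \<in> borel_measurable M" unfolding T_def using meas I1 by (intro borel_measurable_sum) auto
  have intP: "integrable M (\<lambda>\<omega>. Y i \<omega> * Y j \<omega>)" if "i \<in> I" "j \<in> I" for i j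
  proof (cases "i = j")
    case True then show ?thesis using sq[of i] I1[OF that(1)] by (simp add: power2_eq_square)
  next
    case False then show ?thesis using ip I1 that by blast
  qed
  have T2: "(T \<omega>)^2 = (\<Sum>i\<in>I. \<Sum>j\<in>I. Y i \<omega> * Y j \<omega>)" for \<omega>
    unfolding T_def power2_eq_square by (rule sum_product)
  have intT: "integrable M T" unfolding T_def using intY by (intro Bochner_Integration.integrable_sum) auto
  have intT2: "integrable M (\<lambda>\<omega>. (T \<omega>)^2)" unfolding T2 using intP by (intro Bochner_Integration.integrable_sum) auto
  have ET: "expectation T = real n * m"
  proof -
    have "expectation T = (\<Sum>i\<in>I. expectation (Y i))"
      unfolding T_def by (rule Bochner_Integration.integral_sum) (use intY in auto)
    also have "\<dots> = (\<Sum>i\<in>I. m)" using ex I1 by (intro sum.cong) auto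
    finally show ?thesis using cardI by simp
  qed
  have inner: "(\<Sum>j\<in>I. expectation (\<lambda>\<omega>. Y i \<omega> * Y j \<omega>)) = s + (real n - 1) * (m * m)" if i: "i \<in> I" for i
  proof -
    have "(\<Sum>j\<in>I. expectation (\<lambda>\<omega>. Y i \<omega> * Y j \<omega>)) =
        expectation (\<lambda>\<omega>. Y i \<omega> * Y i \<omega>) + (\<Sum>j\<in>I - {i}. expectation (\<lambda>\<omega>. Y i \<omega> * Y j \<omega>))"
      by (rule sum.remove[OF finI i])
    also have "expectation (\<lambda>\<omega>. Y i \<omega> * Y i \<omega>) = s" using ex2[of i] I1[OF i] by (simp add: power2_eq_square)
    also have "(\<Sum>j\<in>I - {i}. expectation (\<lambda>\<omega>. Y i \<omega> * Y j \<omega>)) = (\<Sum>j\<in>I - {i}. m * m)"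
      using ep I1 i by (intro sum.cong) auto
    also have "\<dots> = real (card (I - {i})) * (m * m)" by simp
    also have "card (I - {i}) = n - 1" using i finI cardI by simp
    also have "real (n - 1) = real n - 1" using i I_def by (simp add: of_nat_diff)
    finally show ?thesis .
  qed
  have ET2: "expectation (\<lambda>\<omega>. (T \<omega>)^2) = real n * (s + (real n - 1) * (m * m))"
  proof -
    have "expectation (\<lambda>\<omega>. (T \<omega>)^2) = (\<Sum>i\<in>I. expectation (\<lambda>\<omega>. \<Sum>j\<in>I. Y i \<omega> * Y j \<omega>))"
      unfolding T2 by (rule Bochner_Integration.integral_sum) (use intP in auto)
    also have "\<dots> = (\<Sum>i\<in>I. \<Sum>j\<in>I. expectation (\<lambda>\<omega>. Y i \<omega> * Y j \<omega>))"
      by (intro sum.cong refl Bochner_Integration.integral_sum) (use intP in auto)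
    also have "\<dots> = (\<Sum>i\<in>I. s + (real n - 1) * (m * m))" using inner by (intro sum.cong) auto
    finally show ?thesis using cardI by simp
  qed
  have var: "variance T = real n * (s - m^2)"
    using variance_eq[OF intT intT2] ET ET2 by (simp add: power2_eq_square algebra_simps)
  have "prob {\<omega> \<in> space M. a \<le> \<bar>T \<omega> - expectation T\<bar>} \<le> variance T / a^2"
    by (rule Chebyshev_inequality[OF measT intT2 a])
  moreover have var': "expectation (\<lambda>x. (T x - real n * m)^2) = real n * (s - m^2)" using var ET by simp
  ultimately have "prob {\<omega> \<in> space M. a \<le> \<bar>T \<omega> - real n * m\<bar>} \<le> real n * (s - m^2) / a^2"
    by (simp only: ET var')
  then show ?thesis unfolding T_def I_def .
qed

end

lemma sum_split_ivl:
  fixes f :: "nat \<Rightarrow> real"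
  assumes "1 \<le> p" "p \<le> q"
  shows "(\<Sum>k\<in>{1..q - 1}. f k) - (\<Sum>k\<in>{1..p - 1}. f k) = (\<Sum>k\<in>{p..<q}. f k)"
proof -
  have e1: "{1..q - 1} = {1..<q}" "{1..p - 1} = {1..<p}" using assms by auto
  have "(\<Sum>k\<in>{1..<p}. f k) + (\<Sum>k\<in>{p..<q}. f k) = (\<Sum>k\<in>{1..<q}. f k)"
    by (rule sum.atLeastLessThan_concat) (use assms in auto)
  then show ?thesis unfolding e1 by linarith
qed

lemma dp_less:
  assumes "a \<in> {1..n}" "b \<in> {1..n}" "D a < D b"
  shows "departure_perm D n a < departure_perm D n b"
proof -
  have "b \<in> {j\<in>{1..n}. D j \<le> D b}" "b \<notin> {j\<in>{1..n}. D j \<le> D a}" using assms by auto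
  moreover have "{j\<in>{1..n}. D j \<le> D a} \<subseteq> {j\<in>{1..n}. D j \<le> D b}"
    using assms by auto
  ultimately have "{j\<in>{1..n}. D j \<le> D a} \<subset> {j\<in>{1..n}. D j \<le> D b}" by blast
  then show ?thesis unfolding departure_perm_def by (rule psubset_card_mono[rotated]) simp
qed

lemma det_main:
  fixes X S D :: "nat \<Rightarrow> real" and a m :: real
  assumes ws: "work_conserving_schedule (\<lambda>i. \<Sum>k\<in>{1..i}. X k) S D"
    and Xpos: "\<And>i. i \<ge> 1 \<Longrightarrow> X i > 0"
    and LA: "(\<lambda>n. (\<Sum>k\<in>{1..n}. X k) / real n) \<longlonglongrightarrow> a"
    and LS: "(\<lambda>n. (\<Sum>k\<in>{1..n}. S k) / real n) \<longlonglongrightarrow> m"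
    and ma: "m < a"
  shows "\<forall>k \<sigma>. \<sigma> permutes {1..k} \<longrightarrow>
           (\<lambda>n. pattern_freq k \<sigma> n (departure_perm D n)) \<longlonglongrightarrow> pattern_freq_Cinf k \<sigma>"
proof -
  define A where "A = (\<lambda>i. \<Sum>k\<in>{1..i}. X k)"
  have AS: "A (Suc n) = A n + X (Suc n)" for n unfolding A_def by simp
  have mono: "A l < A m'" if "1 \<le> l" "l < m'" for l m'
  proof -
    have "A n < A (Suc n)" for n using AS[of n] Xpos[of "Suc n"] by simp
    then show ?thesis using lift_Suc_mono_less[of A] that by blast
  qed
  have r1: "\<forall>i\<ge>1. A i \<le> D i" using ws unfolding work_conserving_schedule_def A_def by blast
  have ws': "work_conserving_schedule A S D" using ws unfolding A_def .
  have H: "\<forall>\<epsilon>>0. \<exists>N. \<forall>n\<ge>N. \<forall>a b. 1 \<le> a \<longrightarrow> a < b \<longrightarrow> b \<le> n \<longrightarrow>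
      departure_perm D n b \<le> departure_perm D n a \<longrightarrow> real (b - a) < \<epsilon> * real n"
  proof (intro allI impI)
    fix \<epsilon> :: real assume eps: "\<epsilon> > 0"
    obtain N where N: "\<forall>n\<ge>N. \<forall>p j. 1 \<le> p \<longrightarrow> p < j \<longrightarrow> j \<le> n \<longrightarrow> \<epsilon> * real n \<le> real (j - p) \<longrightarrow>
            (\<Sum>k\<in>{1..j - 1}. S k) - (\<Sum>k\<in>{1..p - 1}. S k) < A j - A p"
      using gap[OF LA LS ma eps] unfolding A_def by blast
    have "\<forall>n\<ge>N. \<forall>a b. 1 \<le> a \<longrightarrow> a < b \<longrightarrow> b \<le> n \<longrightarrow>
      departure_perm D n b \<le> departure_perm D n a \<longrightarrow> real (b - a) < \<epsilon> * real n"
    proof (intro allI impI)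
      fix n a b :: nat
      assume n: "n \<ge> N" and ab: "1 \<le> a" "a < b" "b \<le> n" and dp: "departure_perm D n b \<le> departure_perm D n a"
      have "D b \<le> D a"
      proof (rule ccontr)
        assume "\<not> D b \<le> D a"
        then have "departure_perm D n a < departure_perm D n b" using ab by (intro dp_less) auto
        then show False using dp by simp
      qed
      moreover have "A b \<le> D b" using r1 ab by simp
      ultimately have "A b \<le> D a" by linarith
      then obtain p where p: "1 \<le> p" "p \<le> a" "A b - A p \<le> (\<Sum>l\<in>{p..<b}. S l)"
        using queue_overlap[OF ws' mono ab(1,2)] by blast
      show "real (b - a) < \<epsilon> * real n"
      proof (rule ccontr)
        assume "\<not> real (b - a) < \<epsilon> * real n"
        then have "\<epsilon> * real n \<le> real (b - p)" using p ab by (simp add: of_nat_diff)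
        then have "(\<Sum>k\<in>{1..b - 1}. S k) - (\<Sum>k\<in>{1..p - 1}. S k) < A b - A p"
          using N n p ab by auto
        moreover have "(\<Sum>k\<in>{1..b - 1}. S k) - (\<Sum>k\<in>{1..p - 1}. S k) = (\<Sum>l\<in>{p..<b}. S l)"
          by (rule sum_split_ivl) (use p ab in auto)
        ultimately show False using p by linarith
      qed
    qed
    then show "\<exists>N. \<forall>n\<ge>N. \<forall>a b. 1 \<le> a \<longrightarrow> a < b \<longrightarrow> b \<le> n \<longrightarrow>
      departure_perm D n b \<le> departure_perm D n a \<longrightarrow> real (b - a) < \<epsilon> * real n" by blast
  qed
  show ?thesis
  proof (intro allI impI)
    fix k :: nat and \<sigma> :: "nat \<Rightarrow> nat" assume "\<sigma> permutes {1..k}"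
    then show "(\<lambda>n. pattern_freq k \<sigma> n (departure_perm D n)) \<longlonglongrightarrow> pattern_freq_Cinf k \<sigma>"
      by (rule pf_limit[OF H])
  qed
qed

context prob_space begin

lemma slln:
  fixes Y :: "nat \<Rightarrow> 'a \<Rightarrow> real" and m s :: real
  assumes meas: "\<And>i. i \<ge> 1 \<Longrightarrow> Y i \<in> borel_measurable M"
    and nn: "\<And>i. i \<ge> 1 \<Longrightarrow> AE \<omega> in M. 0 \<le> Y i \<omega>"
    and sq: "\<And>i. i \<ge> 1 \<Longrightarrow> integrable M (\<lambda>\<omega>. Y i \<omega> ^ 2)"
    and ex: "\<And>i. i \<ge> 1 \<Longrightarrow> expectation (Y i) = m"
    and ex2: "\<And>i. i \<ge> 1 \<Longrightarrow> expectation (\<lambda>\<omega>. Y i \<omega> ^ 2) = s"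
    and ip: "\<And>i j. i \<ge> 1 \<Longrightarrow> j \<ge> 1 \<Longrightarrow> i \<noteq> j \<Longrightarrow> integrable M (\<lambda>\<omega>. Y i \<omega> * Y j \<omega>)"
    and ep: "\<And>i j. i \<ge> 1 \<Longrightarrow> j \<ge> 1 \<Longrightarrow> i \<noteq> j \<Longrightarrow> expectation (\<lambda>\<omega>. Y i \<omega> * Y j \<omega>) = m * m"
  shows "AE \<omega> in M. (\<lambda>n. (\<Sum>k\<in>{1..n}. Y k \<omega>) / real n) \<longlonglongrightarrow> m"
proof -
  define T where "T = (\<lambda>n \<omega>. \<Sum>k\<in>{1..n}. Y k \<omega>)"
  have Tm: "T n \<in> borel_measurable M" for n
    unfolding T_def using meas by (intro borel_measurable_sum) auto
  define B where "B = (\<lambda>(\<eta>::real) k. {\<omega> \<in> space M. \<eta> * real (k^2) \<le> \<bar>T (k^2) \<omega> - real (k^2) * m\<bar>})"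
  have BC: "AE \<omega> in M. eventually (\<lambda>k. \<omega> \<in> space M - B \<eta> k) sequentially" if eta: "\<eta> > 0" for \<eta>
  proof (rule borel_cantelli_AE1)
    show "B \<eta> k \<in> sets M" for k
      unfolding B_def
      by (intro borel_measurable_le borel_measurable_const borel_measurable_abs borel_measurable_diff Tm)
    show "emeasure M (B \<eta> k) < \<infinity>" for k
      by (simp add: less_top[symmetric])
    define c where "c = \<bar>s - m^2\<bar> / \<eta>^2"
    have bound: "measure M (B \<eta> k) \<le> c * inverse (real k ^ 2)" if k: "k \<ge> 1" for k
    proof -
      have kpos: "real k > 0" using k by simp
      have "measure M (B \<eta> k) \<le> real (k^2) * (s - m^2) / (\<eta> * real (k^2))^2"
        unfolding B_def T_def
        by (rule cheb_sum[OF meas sq ex ex2 ip ep]) (use eta kpos in auto)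
      also have "\<dots> = (s - m^2) / \<eta>^2 * inverse (real k ^ 2)"
        using kpos eta by (simp add: field_simps power2_eq_square)
      also have "\<dots> \<le> c * inverse (real k ^ 2)"
        unfolding c_def using kpos eta by (intro mult_right_mono divide_right_mono) auto
      finally show ?thesis .
    qed
    show "summable (\<lambda>k. measure M (B \<eta> k))"
    proof (rule summable_comparison_test)
      show "\<exists>N. \<forall>k\<ge>N. norm (measure M (B \<eta> k)) \<le> c * inverse (real k ^ 2)"
        using bound by (intro exI[of _ 1]) auto
      show "summable (\<lambda>k. c * inverse (real k ^ 2))"
        by (intro summable_mult inverse_power_summable) simp
    qed
  qed
  have "AE \<omega> in M. \<forall>q. eventually (\<lambda>k. \<omega> \<in> space M - B (inverse (real (Suc q))) k) sequentially"
    unfolding AE_all_countable by (intro allI BC) simp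
  moreover have "AE \<omega> in M. \<forall>i. i \<ge> 1 \<longrightarrow> 0 \<le> Y i \<omega>"
    unfolding AE_all_countable using nn by (intro allI AE_impI) auto
  ultimately show ?thesis
  proof eventually_elim
    case (elim \<omega>)
    note ev = elim(1) and pos = elim(2)
    have sub: "(\<lambda>k. T (k^2) \<omega> / real (k^2)) \<longlonglongrightarrow> m"
    proof (rule LIMSEQ_I)
      fix e :: real assume e: "e > 0"
      obtain q where q: "inverse (real (Suc q)) < e" using reals_Archimedean[OF e] by blast
      obtain K where K: "\<forall>k\<ge>K. \<omega> \<in> space M - B (inverse (real (Suc q))) k"
        using ev[rule_format, of q] unfolding eventually_sequentially by blast
      have "norm (T (k^2) \<omega> / real (k^2) - m) < e" if k: "k \<ge> max K 1" for k
      proof -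
        have kpos: "real (k^2) > 0" using k by simp
        have "\<not> inverse (real (Suc q)) * real (k^2) \<le> \<bar>T (k^2) \<omega> - real (k^2) * m\<bar>"
          using K k unfolding B_def by auto
        then have lt: "\<bar>T (k^2) \<omega> - real (k^2) * m\<bar> < inverse (real (Suc q)) * real (k^2)" by (simp only: not_le)
        have "T (k^2) \<omega> / real (k^2) - m = (T (k^2) \<omega> - real (k^2) * m) / real (k^2)"
          using kpos by (simp add: diff_divide_distrib)
        then have "\<bar>T (k^2) \<omega> / real (k^2) - m\<bar> = \<bar>T (k^2) \<omega> - real (k^2) * m\<bar> / real (k^2)"
          using kpos by (simp only: abs_divide abs_of_pos)
        also have "\<dots> < inverse (real (Suc q)) * real (k^2) / real (k^2)"
          by (rule divide_strict_right_mono[OF lt kpos])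
        also have "\<dots> = inverse (real (Suc q))" using kpos by simp
        finally have "\<bar>T (k^2) \<omega> / real (k^2) - m\<bar> < inverse (real (Suc q))" .
        then show ?thesis using q by simp
      qed
      then show "\<exists>no. \<forall>k\<ge>no. norm (T (k^2) \<omega> / real (k^2) - m) < e" by blast
    qed
    have "(\<lambda>n. T n \<omega> / real n) \<longlonglongrightarrow> m"
    proof (rule interp[OF _ _ sub])
      show "T n \<omega> \<le> T (Suc n) \<omega>" for n using pos[rule_format, of "Suc n"] by (simp add: T_def)
      show "0 \<le> T n \<omega>" for n unfolding T_def using pos by (intro sum_nonneg) auto
    qed
    then show ?case unfolding T_def .
  qed
qed

end

lemma sq_le_bound: "\<bar>(x::real)^2\<bar> \<le> \<bar>\<bar>x\<bar> + \<bar>x^3\<bar>\<bar>"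
proof (cases "\<bar>x\<bar> \<le> 1")
  case True
  have "x^2 = \<bar>x\<bar> * \<bar>x\<bar>" by (simp add: power2_eq_square abs_mult[symmetric])
  also have "\<dots> \<le> \<bar>x\<bar> * 1" using True by (intro mult_left_mono) auto
  finally show ?thesis by simp
next
  case False
  have "x^2 = \<bar>x\<bar>^2" by simp
  also have "\<dots> \<le> \<bar>x\<bar>^3" using False by (intro power_increasing) auto
  also have "\<dots> = \<bar>x^3\<bar>" by (simp add: power_abs)
  finally show ?thesis by simp
qed

theorem proposition2:
  fixes M :: "'a measure"
    and X :: "nat \<Rightarrow> 'a \<Rightarrow> real"
    and S :: "nat \<Rightarrow> 'a \<Rightarrow> real"
    and D :: "nat \<Rightarrow> 'a \<Rightarrow> real"
    and lam \<mu> :: real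
  assumes "prob_space M"
    and "lam > 0"
    and "\<And>i. i \<ge> 1 \<Longrightarrow> distributed M lborel (X i) (exponential_density lam)"
    and "\<And>i. i \<ge> 1 \<Longrightarrow> S i \<in> borel_measurable M"
    and "\<And>i. i \<ge> 1 \<Longrightarrow> distr M borel (S i) = distr M borel (S 1)"
    and "prob_space.indep_vars M (\<lambda>_. borel)
           (\<lambda>k. case k of Inl i \<Rightarrow> X i | Inr i \<Rightarrow> S i)
           (Inl ` {1..} \<union> Inr ` {1..})"
    and "AE \<omega> in M. S 1 \<omega> \<ge> 0"
    and "integrable M (S 1)"
    and "\<mu> = prob_space.expectation M (S 1)"
    and "integrable M (\<lambda>\<omega>. S 1 \<omega> ^ 3)"
    and "lam * \<mu> < 1"
    and "AE \<omega> in M. work_conserving_schedule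
                       (\<lambda>i. \<Sum>k\<in>{1..i}. X k \<omega>) (\<lambda>i. S i \<omega>) (\<lambda>i. D i \<omega>)"
  shows "AE \<omega> in M. \<forall>k \<sigma>. \<sigma> permutes {1..k} \<longrightarrow>
           (\<lambda>n. pattern_freq k \<sigma> n (departure_perm (\<lambda>i. D i \<omega>) n))
             \<longlonglongrightarrow> pattern_freq_Cinf k \<sigma>"
proof -
  note ps = assms(1) and lam = assms(2) and Xd = assms(3) and Sm = assms(4) and Sd = assms(5)
    and ind = assms(6) and S1nn = assms(7) and S1int = assms(8) and mu = assms(9)
    and S13 = assms(10) and rho = assms(11) and wcs = assms(12)
  interpret prob_space M by (rule ps)
  define F where "F = (\<lambda>k. case k of Inl i \<Rightarrow> X i | Inr i \<Rightarrow> S i)"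
  define J where "J = Inl ` {1::nat..} \<union> Inr ` {1::nat..}"
  have indF: "indep_vars (\<lambda>_. borel) F J" using ind unfolding F_def J_def .
  have Xm: "X i \<in> borel_measurable M" if "i \<ge> 1" for i
    using distributed_measurable[OF Xd[OF that]] by simp
  have Xint: "integrable M (X i)" if "i \<ge> 1" for i
    using erlang_ith_moment_integrable[OF lam Xd[OF that], of 1] by simp
  have Xsq: "integrable M (\<lambda>\<omega>. X i \<omega> ^ 2)" if "i \<ge> 1" for i
    using erlang_ith_moment_integrable[OF lam Xd[OF that], of 2] by simp
  have Xex: "expectation (X i) = 1 / lam" if "i \<ge> 1" for i
    using exponential_distributed_expectation[OF lam Xd[OF that]] .
  have Xex2: "expectation (\<lambda>\<omega>. X i \<omega> ^ 2) = 2 / lam^2" if "i \<ge> 1" for i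
    using erlang_ith_moment[OF lam Xd[OF that], of 2] by simp
  have Xpos: "AE \<omega> in M. X i \<omega> > 0" if "i \<ge> 1" for i
  proof -
    have "prob {\<omega> \<in> space M. X i \<omega> \<le> 0} = 1 - exp (- 0 * lam)"
      by (rule exponential_distributedD_le[OF Xd[OF that] _ lam]) simp
    then have "prob {\<omega> \<in> space M. X i \<omega> \<le> 0} = 0" by simp
    moreover have "{\<omega> \<in> space M. X i \<omega> \<le> 0} \<in> sets M" using Xm[OF that] by measurable
    ultimately show ?thesis
      by (subst AE_iff_measurable[OF _ refl]) (auto simp: emeasure_eq_measure not_less)
  qed
  have Xnn: "AE \<omega> in M. 0 \<le> X i \<omega>" if "i \<ge> 1" for i
    using Xpos[OF that] by eventually_elim simp
  have pairF: "integrable M (\<lambda>\<omega>. F u \<omega> * F v \<omega>) \<and>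
      expectation (\<lambda>\<omega>. F u \<omega> * F v \<omega>) = expectation (F u) * expectation (F v)"
    if uv: "u \<in> J" "v \<in> J" "u \<noteq> v" "integrable M (F u)" "integrable M (F v)" for u v
  proof -
    have ind2: "indep_vars (\<lambda>_. borel) F {u, v}" by (rule indep_vars_subset[OF indF]) (use uv in auto)
    have intI: "\<And>k. k \<in> {u, v} \<Longrightarrow> integrable M (F k)" using uv by auto
    have p: "(\<lambda>\<omega>. \<Prod>k\<in>{u, v}. F k \<omega>) = (\<lambda>\<omega>. F u \<omega> * F v \<omega>)" using uv by simp
    have "integrable M (\<lambda>\<omega>. \<Prod>k\<in>{u, v}. F k \<omega>)"
      by (rule indep_vars_integrable[OF _ ind2 intI]) auto
    moreover have "expectation (\<lambda>\<omega>. \<Prod>k\<in>{u, v}. F k \<omega>) = (\<Prod>k\<in>{u, v}. expectation (F k))"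
      by (rule indep_vars_lebesgue_integral[OF _ ind2 intI]) auto
    ultimately show ?thesis using uv unfolding p by simp
  qed
  have LX: "AE \<omega> in M. (\<lambda>n. (\<Sum>k\<in>{1..n}. X k \<omega>) / real n) \<longlonglongrightarrow> 1 / lam"
  proof (rule slln[OF Xm Xnn Xsq Xex Xex2])
    fix i j :: nat assume ij: "i \<ge> 1" "j \<ge> 1" "i \<noteq> j"
    have "Inl i \<in> J" "Inl j \<in> J" "Inl i \<noteq> (Inl j :: nat + nat)" using ij unfolding J_def by auto
    moreover have "integrable M (F (Inl i))" "integrable M (F (Inl j))" using Xint ij unfolding F_def by auto
    ultimately have "integrable M (\<lambda>\<omega>. F (Inl i) \<omega> * F (Inl j) \<omega>) \<and>
      expectation (\<lambda>\<omega>. F (Inl i) \<omega> * F (Inl j) \<omega>) = expectation (F (Inl i)) * expectation (F (Inl j))"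
      by (rule pairF)
    then show "integrable M (\<lambda>\<omega>. X i \<omega> * X j \<omega>)"
      and "expectation (\<lambda>\<omega>. X i \<omega> * X j \<omega>) = 1 / lam * (1 / lam)"
      using Xex ij unfolding F_def by auto
  qed
  have S1m: "S 1 \<in> borel_measurable M" using Sm by simp
  have S1sq: "integrable M (\<lambda>\<omega>. S 1 \<omega> ^ 2)"
  proof (rule Bochner_Integration.integrable_bound)
    show "integrable M (\<lambda>\<omega>. \<bar>S 1 \<omega>\<bar> + \<bar>S 1 \<omega> ^ 3\<bar>)"
      using S1int S13 by (intro Bochner_Integration.integrable_add integrable_abs)
    show "(\<lambda>\<omega>. S 1 \<omega> ^ 2) \<in> borel_measurable M" using S1m by measurable
    show "AE \<omega> in M. norm (S 1 \<omega> ^ 2) \<le> norm (\<bar>S 1 \<omega>\<bar> + \<bar>S 1 \<omega> ^ 3\<bar>)"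
      using sq_le_bound by simp
  qed
  have Sint: "integrable M (S i)" if "i \<ge> 1" for i
  proof -
    have "integrable (distr M borel (S i)) (\<lambda>x. x) \<longleftrightarrow> integrable M (S i)"
      using Sm[OF that] by (intro integrable_distr_eq) auto
    moreover have "integrable (distr M borel (S 1)) (\<lambda>x. x) \<longleftrightarrow> integrable M (S 1)"
      using S1m by (intro integrable_distr_eq) auto
    ultimately show ?thesis using Sd[OF that] S1int by simp
  qed
  have Ssq: "integrable M (\<lambda>\<omega>. S i \<omega> ^ 2)" if "i \<ge> 1" for i
  proof -
    have "integrable (distr M borel (S i)) (\<lambda>x. x ^ 2) \<longleftrightarrow> integrable M (\<lambda>\<omega>. S i \<omega> ^ 2)"
      using Sm[OF that] by (intro integrable_distr_eq) auto
    moreover have "integrable (distr M borel (S 1)) (\<lambda>x. x ^ 2) \<longleftrightarrow> integrable M (\<lambda>\<omega>. S 1 \<omega> ^ 2)"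
      using S1m by (intro integrable_distr_eq) auto
    ultimately show ?thesis using Sd[OF that] S1sq by simp
  qed
  have Sex: "expectation (S i) = \<mu>" if "i \<ge> 1" for i
  proof -
    have "integral\<^sup>L (distr M borel (S i)) (\<lambda>x. x) = expectation (S i)"
      using Sm[OF that] by (intro integral_distr) auto
    moreover have "integral\<^sup>L (distr M borel (S 1)) (\<lambda>x. x) = expectation (S 1)"
      using S1m by (intro integral_distr) auto
    ultimately show ?thesis using Sd[OF that] mu by simp
  qed
  have Sex2: "expectation (\<lambda>\<omega>. S i \<omega> ^ 2) = expectation (\<lambda>\<omega>. S 1 \<omega> ^ 2)" if "i \<ge> 1" for i
  proof -
    have "integral\<^sup>L (distr M borel (S i)) (\<lambda>x. x ^ 2) = expectation (\<lambda>\<omega>. S i \<omega> ^ 2)"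
      using Sm[OF that] by (intro integral_distr) auto
    moreover have "integral\<^sup>L (distr M borel (S 1)) (\<lambda>x. x ^ 2) = expectation (\<lambda>\<omega>. S 1 \<omega> ^ 2)"
      using S1m by (intro integral_distr) auto
    ultimately show ?thesis using Sd[OF that] by simp
  qed
  have Snn: "AE \<omega> in M. 0 \<le> S i \<omega>" if "i \<ge> 1" for i
  proof -
    have h: "AE x in distr M borel (S 1). 0 \<le> x"
      using S1nn S1m by (subst AE_distr_iff) auto
    have "AE x in distr M borel (S i). 0 \<le> x" unfolding Sd[OF that] by (rule h)
    then show ?thesis using Sm[OF that] by (subst (asm) AE_distr_iff) auto
  qed
  have LS: "AE \<omega> in M. (\<lambda>n. (\<Sum>k\<in>{1..n}. S k \<omega>) / real n) \<longlonglongrightarrow> \<mu>"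
  proof (rule slln[OF Sm Snn Ssq Sex Sex2])
    fix i j :: nat assume ij: "i \<ge> 1" "j \<ge> 1" "i \<noteq> j"
    have "Inr i \<in> J" "Inr j \<in> J" "Inr i \<noteq> (Inr j :: nat + nat)" using ij unfolding J_def by auto
    moreover have "integrable M (F (Inr i))" "integrable M (F (Inr j))" using Sint ij unfolding F_def by auto
    ultimately have "integrable M (\<lambda>\<omega>. F (Inr i) \<omega> * F (Inr j) \<omega>) \<and>
      expectation (\<lambda>\<omega>. F (Inr i) \<omega> * F (Inr j) \<omega>) = expectation (F (Inr i)) * expectation (F (Inr j))"
      by (rule pairF)
    then show "integrable M (\<lambda>\<omega>. S i \<omega> * S j \<omega>)"
      and "expectation (\<lambda>\<omega>. S i \<omega> * S j \<omega>) = \<mu> * \<mu>"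
      using Sex ij unfolding F_def by auto
  qed
  have XposAll: "AE \<omega> in M. \<forall>i. i \<ge> 1 \<longrightarrow> X i \<omega> > 0"
    unfolding AE_all_countable using Xpos by (intro allI AE_impI) auto
  have ma: "\<mu> < 1 / lam" using rho lam by (simp add: field_simps)
  from wcs XposAll LX LS show ?thesis
  proof eventually_elim
    case (elim \<omega>)
    show ?case
      by (rule det_main[OF elim(1) _ elim(3) elim(4) ma]) (use elim(2) in auto)
  qed
qed

end
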